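(* Let $3\le k\le n-1$. If $T$ is a tree attaining the maximum value of $M_1$ over $\mathcal{CT}_{n,k}$, or a tree attaining the maximum value of $M_2$ over $\mathcal{CT}_{n,k}$, then $T$ contains at most two vertices of degree $3$.
   Context: A chemical tree is a tree with maximum degree at most $4$. A segment of a tree is a path of positive length neither of whose end vertices has degree $2$ and all of whose internal vertices have degree $2$. $\mathcal{CT}_{n,k}$ is the class of all $n$-vertex chemical trees with exactly $k$ segments. $M_1(G)=\sum_{v}d_v^2$ and $M_2(G)=\sum_{uv\in E(G)}d_ud_v$, where $d_v$ is the degree of $v$. *)

theory Defs
  imports Main
begin

definition is_graph :: "nat \<Rightarrow> nat set set \<Rightarrow> bool" where
  "is_graph n E \<longleftrightarrow> (\<forall>e\<in>E. e \<subseteq> {..<n} \<and> card e = 2)"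

definition deg :: "nat set set \<Rightarrow> nat \<Rightarrow> nat" where
  "deg E v = card {e\<in>E. v \<in> e}"

definition adj :: "nat set set \<Rightarrow> (nat \<times> nat) set" where
  "adj E = {(u, v). {u, v} \<in> E}"

definition is_tree :: "nat \<Rightarrow> nat set set \<Rightarrow> bool" where
  "is_tree n E \<longleftrightarrow> is_graph n E \<and> n \<ge> 1 \<and> card E = n - 1 \<and>
     (\<forall>u\<in>{..<n}. \<forall>v\<in>{..<n}. (u, v) \<in> (adj E)\<^sup>*)"

definition chemical_tree :: "nat \<Rightarrow> nat set set \<Rightarrow> bool" where
  "chemical_tree n E \<longleftrightarrow> is_tree n E \<and> (\<forall>v\<in>{..<n}. deg E v \<le> 4)"

definition segment_path :: "nat \<Rightarrow> nat set set \<Rightarrow> nat list \<Rightarrow> bool" where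
  "segment_path n E p \<longleftrightarrow> length p \<ge> 2 \<and> distinct p \<and> set p \<subseteq> {..<n} \<and>
     (\<forall>i. Suc i < length p \<longrightarrow> {p ! i, p ! Suc i} \<in> E) \<and>
     deg E (hd p) \<noteq> 2 \<and> deg E (last p) \<noteq> 2 \<and>
     (\<forall>i. 0 < i \<and> Suc i < length p \<longrightarrow> deg E (p ! i) = 2)"

definition path_edges :: "nat list \<Rightarrow> nat set set" where
  "path_edges p = {{p ! i, p ! Suc i} | i. Suc i < length p}"

text \<open>Segments are identified with their edge sets (so a path and its reversal coincide).\<close>
definition segments :: "nat \<Rightarrow> nat set set \<Rightarrow> nat set set set" where
  "segments n E = path_edges ` {p. segment_path n E p}"

definition CT :: "nat \<Rightarrow> nat \<Rightarrow> nat set set set" where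
  "CT n k = {E. chemical_tree n E \<and> card (segments n E) = k}"

definition M1 :: "nat \<Rightarrow> nat set set \<Rightarrow> nat" where
  "M1 n E = (\<Sum>v\<in>{..<n}. (deg E v)\<^sup>2)"

definition M2 :: "nat set set \<Rightarrow> nat" where
  "M2 E = (\<Sum>e\<in>E. \<Prod>v\<in>e. deg E v)"

end

theory Submission
  imports Defs
begin
lemma adj_sym: "(u,v) \<in> adj E \<Longrightarrow> (v,u) \<in> adj E"
  by (auto simp: adj_def insert_commute)

lemma rt_sym: "(u,v) \<in> (adj E)\<^sup>* \<Longrightarrow> (v,u) \<in> (adj E)\<^sup>*"
proof (induction rule: rtrancl_induct)
  case base then show ?case by simp
next
  case (step y z)
  then show ?case by (meson adj_sym converse_rtrancl_into_rtrancl)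
qed

lemma rt_mono: "E \<subseteq> F \<Longrightarrow> (u,v) \<in> (adj E)\<^sup>* \<Longrightarrow> (u,v) \<in> (adj F)\<^sup>*"
proof -
  assume "E \<subseteq> F" "(u,v) \<in> (adj E)\<^sup>*"
  moreover have "adj E \<subseteq> adj F" using \<open>E \<subseteq> F\<close> by (auto simp: adj_def)
  ultimately show ?thesis using rtrancl_mono by blast
qed

lemma edge_rt: "{u,v} \<in> E \<Longrightarrow> (u,v) \<in> (adj E)\<^sup>*"
  by (simp add: adj_def r_into_rtrancl)

lemma rt_step: "(u,w) \<in> (adj E)\<^sup>* \<Longrightarrow> {w,v} \<in> E \<Longrightarrow> (u,v) \<in> (adj E)\<^sup>*"
  by (simp add: adj_def rtrancl.rtrancl_into_rtrancl)

lemma prefix_lem: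
  "(u,v) \<in> (adj (insert {s,t} F))\<^sup>* \<Longrightarrow>
   (u,v) \<in> (adj F)\<^sup>* \<or> (u,s) \<in> (adj F)\<^sup>* \<or> (u,t) \<in> (adj F)\<^sup>*"
proof (induction rule: rtrancl_induct)
  case base then show ?case by simp
next
  case (step y z)
  have "{y,z} = {s,t} \<or> {y,z} \<in> F" using step(2) by (auto simp: adj_def)
  then show ?case
  proof
    assume "{y,z} = {s,t}"
    then have "y = s \<or> y = t" by (auto simp: doubleton_eq_iff)
    then show ?thesis using step(3) by auto
  next
    assume "{y,z} \<in> F"
    then show ?thesis using step(3) rt_step by blast
  qed
qed

lemma suffix_lem:
  "(u,v) \<in> (adj (insert {s,t} F))\<^sup>* \<Longrightarrow>
   (u,v) \<in> (adj F)\<^sup>* \<or> (s,v) \<in> (adj F)\<^sup>* \<or> (t,v) \<in> (adj F)\<^sup>*"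
  using prefix_lem[OF rt_sym] rt_sym by blast

lemma count_comp:
  assumes "finite F" "\<forall>e\<in>F. \<exists>s t. e = {s,t}" "finite S"
    "\<forall>v\<in>V. \<exists>z\<in>S. (v,z) \<in> (adj F)\<^sup>*"
  shows "card V \<le> card F + card S"
  using assms
proof (induction F arbitrary: S rule: finite_induct)
  case empty
  have "adj {} = {}" by (simp add: adj_def)
  then have "V \<subseteq> S" using empty.prems(3) by auto
  then show ?case using card_mono[OF empty.prems(2)] by simp
next
  case (insert e F)
  obtain s t where e: "e = {s,t}" using insert.prems(1) by blast
  have fe: "\<forall>e\<in>F. \<exists>s t. e = {s,t}" using insert.prems(1) by blast
  have reach: "\<And>v. v \<in> V \<Longrightarrow> \<exists>z\<in>S. (v,z) \<in> (adj (insert {s,t} F))\<^sup>*"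
    using insert.prems(3) e by simp
  have cF: "card (insert e F) = Suc (card F)" using insert.hyps by simp
  show ?case
  proof (cases "\<exists>z\<in>S. (s,z) \<in> (adj F)\<^sup>*")
    case True
    have "\<forall>v\<in>V. \<exists>z\<in>insert t S. (v,z) \<in> (adj F)\<^sup>*"
    proof
      fix v assume "v \<in> V"
      then obtain z where z: "z \<in> S" "(v,z) \<in> (adj (insert {s,t} F))\<^sup>*" using reach by blast
      from prefix_lem[OF z(2)] True z(1) show "\<exists>z\<in>insert t S. (v,z) \<in> (adj F)\<^sup>*"
        by (meson insertCI rtrancl_trans)
    qed
    then have "card V \<le> card F + card (insert t S)"
      using insert.IH[OF fe] insert.prems(2) by blast
    also have "\<dots> \<le> card (insert e F) + card S" using cF card_insert_le_m1
      by (simp add: card_insert_if insert.prems(2))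
    finally show ?thesis .
  next
    case False
    show ?thesis
    proof (cases "\<exists>z\<in>S. (t,z) \<in> (adj F)\<^sup>*")
      case True
      have "\<forall>v\<in>V. \<exists>z\<in>insert s S. (v,z) \<in> (adj F)\<^sup>*"
      proof
        fix v assume "v \<in> V"
        then obtain z where z: "z \<in> S" "(v,z) \<in> (adj (insert {s,t} F))\<^sup>*" using reach by blast
        from prefix_lem[OF z(2)] True z(1) show "\<exists>z\<in>insert s S. (v,z) \<in> (adj F)\<^sup>*"
          by (meson insertCI rtrancl_trans)
      qed
      then have "card V \<le> card F + card (insert s S)"
        using insert.IH[OF fe] insert.prems(2) by blast
      also have "\<dots> \<le> card (insert e F) + card S" using cF
        by (simp add: card_insert_if insert.prems(2))
      finally show ?thesis .
    next
      case False2: False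
      have "\<forall>v\<in>V. \<exists>z\<in>S. (v,z) \<in> (adj F)\<^sup>*"
      proof
        fix v assume "v \<in> V"
        then obtain z where z: "z \<in> S" "(v,z) \<in> (adj (insert {s,t} F))\<^sup>*" using reach by blast
        from suffix_lem[OF z(2)] False False2 z(1) show "\<exists>z\<in>S. (v,z) \<in> (adj F)\<^sup>*"
          by blast
      qed
      then have "card V \<le> card F + card S"
        using insert.IH[OF fe] insert.prems(2) by blast
      then show ?thesis using cF by simp
    qed
  qed
qed

lemma seg_len: "segment_path n E p \<Longrightarrow> 2 \<le> length p"
  by (simp add: segment_path_def)

lemma seg_internal:
  "segment_path n E p \<Longrightarrow> i < length p \<Longrightarrow> deg E (p!i) \<noteq> 2 \<Longrightarrow> i = 0 \<or> i = length p - 1"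
proof (rule ccontr)
  assume sp: "segment_path n E p" and i: "i < length p" and d: "deg E (p!i) \<noteq> 2"
    and n: "\<not> (i = 0 \<or> i = length p - 1)"
  then have "0 < i \<and> Suc i < length p" by auto
  then show False using sp d unfolding segment_path_def by blast
qed

lemma seg_edge: "segment_path n E p \<Longrightarrow> Suc i < length p \<Longrightarrow> {p!i, p!Suc i} \<in> E"
  by (simp add: segment_path_def)

lemma seg_pe_sub: "segment_path n E p \<Longrightarrow> path_edges p \<subseteq> E"
  by (auto simp: path_edges_def segment_path_def)

lemma walk_conn:
  "(\<forall>t. i \<le> t \<and> t < j \<longrightarrow> {r!t, r!Suc t} \<in> F) \<Longrightarrow> i \<le> j \<Longrightarrow> (r!i, r!j) \<in> (adj F)\<^sup>*"
proof (induction j)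
  case 0 then show ?case by simp
next
  case (Suc j)
  show ?case
  proof (cases "i = Suc j")
    case True then show ?thesis by simp
  next
    case False
    then have "(r!i, r!j) \<in> (adj F)\<^sup>*" using Suc by auto
    moreover have "{r!j, r!Suc j} \<in> F" using Suc.prems False by auto
    ultimately show ?thesis using rt_step by blast
  qed
qed

lemma pos_end:
  assumes sp: "segment_path n E p" and pe: "{x,b} \<in> path_edges p" and d: "deg E x \<noteq> 2" and xb: "x \<noteq> b"
  shows "(p!0 = x \<and> p!1 = b) \<or> (p!(length p - 1) = x \<and> p!(length p - 2) = b)"
proof -
  obtain j where j: "{x,b} = {p!j, p!Suc j}" "Suc j < length p"
    using pe by (auto simp: path_edges_def)
  then have "(x = p!j \<and> b = p!Suc j) \<or> (x = p!Suc j \<and> b = p!j)" by (auto simp: doubleton_eq_iff)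
  then show ?thesis
  proof
    assume a: "x = p!j \<and> b = p!Suc j"
    then have "j = 0 \<or> j = length p - 1" using seg_internal[OF sp, of j] d j(2) by simp
    then have "j = 0" using j(2) by auto
    then show ?thesis using a by simp
  next
    assume a: "x = p!Suc j \<and> b = p!j"
    then have "Suc j = 0 \<or> Suc j = length p - 1" using seg_internal[OF sp, of "Suc j"] d j(2) by simp
    then have "Suc j = length p - 1" by auto
    then have "j = length p - 2" by auto
    then show ?thesis using a \<open>Suc j = length p - 1\<close> by simp
  qed
qed

definition swp :: "nat set \<Rightarrow> nat set \<Rightarrow> nat set \<Rightarrow> nat set \<Rightarrow> nat set \<Rightarrow> nat set" where
  "swp m1 n1 m2 n2 e = (if e = m1 then n1 else if e = m2 then n2 else e)"

lemma swap_seg: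
  fixes E E' E0 :: "nat set set"
  assumes E0: "E0 = E - {{x1,b1},{x2,b2}}"
  and E': "E' = E0 \<union> {{y1,b1},{y2,b2}}"
  and degs: "\<And>v. (deg E' v = 2) = (deg E v = 2)"
  and dx1: "deg E x1 \<noteq> 2" and dx2: "deg E x2 \<noteq> 2" and dy1: "deg E y1 \<noteq> 2" and dy2: "deg E y2 \<noteq> 2"
  and ne: "y1 \<noteq> x1" "y1 \<noteq> x2" "y2 \<noteq> x1" "y2 \<noteq> x2" "b1 \<noteq> b2"
     "b1 \<noteq> x1" "b1 \<noteq> x2" "b2 \<noteq> x1" "b2 \<noteq> x2"
  and yn: "y1 < n" "y2 < n"
  and r1: "(b1,y1) \<notin> (adj E0)\<^sup>*" and r2: "(b2,y2) \<notin> (adj E0)\<^sup>*"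
  and r3: "y1 = y2 \<Longrightarrow> (b1,b2) \<notin> (adj E0)\<^sup>*"
  and sp: "segment_path n E p"
  shows "\<exists>q. segment_path n E' q \<and> path_edges q = swp {x1,b1} {y1,b1} {x2,b2} {y2,b2} ` path_edges p"
proof -
  define L where "L = length p"
  have L2: "2 \<le> L" using seg_len[OF sp] L_def by simp
  have dist: "distinct p" using sp by (simp add: segment_path_def)
  have setp: "set p \<subseteq> {..<n}" using sp by (simp add: segment_path_def)
  define P1 where "P1 = ({x1,b1} \<in> path_edges p)"
  define P2 where "P2 = ({x2,b2} \<in> path_edges p)"
  define \<sigma> where "\<sigma> = (\<lambda>v. if v = x1 \<and> P1 then y1 else if v = x2 \<and> P2 then y2 else v)"
  define q where "q = map \<sigma> p"
  define g where "g = swp {x1,b1} {y1,b1} {x2,b2} {y2,b2}"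
  have idx: "\<And>i j. i < L \<Longrightarrow> j < L \<Longrightarrow> p!i = p!j \<Longrightarrow> i = j"
    using dist L_def nth_eq_iff_index_eq by blast
  have xpos: "\<And>t. t < L \<Longrightarrow> p!t = x1 \<or> p!t = x2 \<Longrightarrow> t = 0 \<or> t = L - 1"
    using seg_internal[OF sp] dx1 dx2 L_def by blast
  have F1: "(p!0 = x1 \<and> p!1 = b1) \<or> (p!(L-1) = x1 \<and> p!(L-2) = b1)" if P1
    using pos_end[OF sp _ dx1] ne that L_def P1_def by auto
  have F2: "(p!0 = x2 \<and> p!1 = b2) \<or> (p!(L-1) = x2 \<and> p!(L-2) = b2)" if P2
    using pos_end[OF sp _ dx2] ne that L_def P2_def by auto
  have E0edge: "{p!t, p!Suc t} \<in> E0"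
    if "Suc t < L" "p!t \<noteq> x1" "p!t \<noteq> x2" "p!Suc t \<noteq> x1" "p!Suc t \<noteq> x2" for t
    using seg_edge[OF sp, of t] that E0 L_def by (auto simp: doubleton_eq_iff)
  have rwalk: "(p!i, p!j) \<in> (adj E0)\<^sup>*"
    if "i \<le> j" "j < L" "\<forall>t. i \<le> t \<and> t \<le> j \<longrightarrow> p!t \<noteq> x1 \<and> p!t \<noteq> x2" for i j
  proof (rule walk_conn)
    show "\<forall>t. i \<le> t \<and> t < j \<longrightarrow> {p ! t, p ! Suc t} \<in> E0"
      using E0edge that by auto
  qed (use that in auto)
  have K1: "y1 \<notin> set p" if P1
  proof
    assume "y1 \<in> set p"
    then obtain k where k: "k < L" "p!k = y1" by (auto simp: in_set_conv_nth L_def)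
    have k01: "k = 0 \<or> k = L - 1" using seg_internal[OF sp, of k] k dy1 L_def by auto
    from F1[OF that] show False
    proof
      assume a: "p!0 = x1 \<and> p!1 = b1"
      then have kL: "k = L - 1" using k01 k ne by auto
      have "(p!1, p!(L-1)) \<in> (adj E0)\<^sup>*"
      proof (rule rwalk)
        show "\<forall>t. 1 \<le> t \<and> t \<le> L - 1 \<longrightarrow> p ! t \<noteq> x1 \<and> p ! t \<noteq> x2"
        proof (intro allI impI)
          fix t assume t: "1 \<le> t \<and> t \<le> L - 1"
          show "p ! t \<noteq> x1 \<and> p ! t \<noteq> x2"
          proof (cases "t = L - 1")
            case True then show ?thesis using k kL ne by auto
          next
            case False then show ?thesis using xpos[of t] t L2 by fastforce
          qed
        qed
      qed (use L2 in auto)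
      then show False using r1 a k kL by simp
    next
      assume a: "p!(L-1) = x1 \<and> p!(L-2) = b1"
      then have kL: "k = 0" using k01 k ne by auto
      have "(p!0, p!(L-2)) \<in> (adj E0)\<^sup>*"
      proof (rule rwalk)
        show "\<forall>t. 0 \<le> t \<and> t \<le> L - 2 \<longrightarrow> p ! t \<noteq> x1 \<and> p ! t \<noteq> x2"
        proof (intro allI impI)
          fix t assume t: "0 \<le> t \<and> t \<le> L - 2"
          show "p ! t \<noteq> x1 \<and> p ! t \<noteq> x2"
          proof (cases "t = 0")
            case True then show ?thesis using k kL ne by auto
          next
            case False then show ?thesis using xpos[of t] t L2 by fastforce
          qed
        qed
      qed (use L2 in auto)
      then show False using r1 rt_sym a k kL by fastforce
    qed
  qed
  have K2: "y2 \<notin> set p" if P2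
  proof
    assume "y2 \<in> set p"
    then obtain k where k: "k < L" "p!k = y2" by (auto simp: in_set_conv_nth L_def)
    have k01: "k = 0 \<or> k = L - 1" using seg_internal[OF sp, of k] k dy2 L_def by auto
    from F2[OF that] show False
    proof
      assume a: "p!0 = x2 \<and> p!1 = b2"
      then have kL: "k = L - 1" using k01 k ne by auto
      have "(p!1, p!(L-1)) \<in> (adj E0)\<^sup>*"
      proof (rule rwalk)
        show "\<forall>t. 1 \<le> t \<and> t \<le> L - 1 \<longrightarrow> p ! t \<noteq> x1 \<and> p ! t \<noteq> x2"
        proof (intro allI impI)
          fix t assume t: "1 \<le> t \<and> t \<le> L - 1"
          show "p ! t \<noteq> x1 \<and> p ! t \<noteq> x2"
          proof (cases "t = L - 1")
            case True then show ?thesis using k kL ne by auto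
          next
            case False then show ?thesis using xpos[of t] t L2 by fastforce
          qed
        qed
      qed (use L2 in auto)
      then show False using r2 a k kL by simp
    next
      assume a: "p!(L-1) = x2 \<and> p!(L-2) = b2"
      then have kL: "k = 0" using k01 k ne by auto
      have "(p!0, p!(L-2)) \<in> (adj E0)\<^sup>*"
      proof (rule rwalk)
        show "\<forall>t. 0 \<le> t \<and> t \<le> L - 2 \<longrightarrow> p ! t \<noteq> x1 \<and> p ! t \<noteq> x2"
        proof (intro allI impI)
          fix t assume t: "0 \<le> t \<and> t \<le> L - 2"
          show "p ! t \<noteq> x1 \<and> p ! t \<noteq> x2"
          proof (cases "t = 0")
            case True then show ?thesis using k kL ne by auto
          next
            case False then show ?thesis using xpos[of t] t L2 by fastforce
          qed
        qed
      qed (use L2 in auto)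
      then show False using r2 rt_sym a k kL by fastforce
    qed
  qed
  have midwalk: "(p!1, p!(L-2)) \<in> (adj E0)\<^sup>*" if "3 \<le> L"
  proof (rule rwalk)
    show "\<forall>t. 1 \<le> t \<and> t \<le> L - 2 \<longrightarrow> p ! t \<noteq> x1 \<and> p ! t \<noteq> x2"
    proof (intro allI impI)
      fix t assume t: "1 \<le> t \<and> t \<le> L - 2"
      then have "t < L" "t \<noteq> 0" "t \<noteq> L - 1" using that by auto
      then show "p ! t \<noteq> x1 \<and> p ! t \<noteq> x2" using xpos[of t] by blast
    qed
  qed (use that in auto)
  have K3: "y1 \<noteq> y2" if P1 P2 "x1 \<noteq> x2"
  proof
    assume yy: "y1 = y2"
    from F1[OF that(1)] F2[OF that(2)] that(3)
    have "(p!0 = x1 \<and> p!1 = b1 \<and> p!(L-1) = x2 \<and> p!(L-2) = b2) \<or>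
          (p!0 = x2 \<and> p!1 = b2 \<and> p!(L-1) = x1 \<and> p!(L-2) = b1)" by auto
    moreover have "3 \<le> L"
    proof (rule ccontr)
      assume "\<not> 3 \<le> L" then have "L = 2" using L2 by auto
      then show False using F1[OF that(1)] F2[OF that(2)] ne that(3) by auto
    qed
    ultimately show False using midwalk r3[OF yy] rt_sym by blast
  qed
  have K4: "\<not> (P1 \<and> P2)" if "x1 = x2"
  proof
    assume "P1 \<and> P2"
    with F1 F2 have "(p!0 = x1 \<and> p!1 = b1) \<or> (p!(L-1) = x1 \<and> p!(L-2) = b1)"
      "(p!0 = x1 \<and> p!1 = b2) \<or> (p!(L-1) = x1 \<and> p!(L-2) = b2)" using that by auto
    moreover have "0 \<noteq> L - 1" using L2 by auto
    ultimately show False using idx[of 0 "L-1"] L2 ne by auto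
  qed
  have EC: "{\<sigma> (p!i), \<sigma> (p!Suc i)} = g {p!i, p!Suc i} \<and> g {p!i, p!Suc i} \<in> E'"
    if i: "Suc i < L" for i
  proof -
    have eE: "{p!i, p!Suc i} \<in> E" using seg_edge[OF sp] i L_def by simp
    have epe: "{p!i, p!Suc i} \<in> path_edges p" using i L_def by (auto simp: path_edges_def)
    show ?thesis
    proof (cases "{p!i, p!Suc i} = {x1,b1}")
      case True
      then have "P1" using epe P1_def by simp
      then show ?thesis using True ne E' unfolding g_def swp_def \<sigma>_def
        by (auto simp: doubleton_eq_iff)
    next
      case F: False
      show ?thesis
      proof (cases "{p!i, p!Suc i} = {x2,b2}")
        case True
        then have "P2" using epe P2_def by simp
        then have "\<not> (x2 = x1 \<and> P1)" using K4 by auto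
        then show ?thesis using True F \<open>P2\<close> ne E' unfolding g_def swp_def \<sigma>_def
          by (auto simp: doubleton_eq_iff)
      next
        case F2': False
        have inE0: "{p!i, p!Suc i} \<in> E0" using eE F F2' E0 by auto
        have li: "Suc i = L - 1 \<Longrightarrow> L - 2 = i" by auto
        have fx: "\<sigma> v = v" if "v = p!i \<or> v = p!Suc i" for v
        proof -
          have "\<not> (v = x1 \<and> P1)"
          proof
            assume a: "v = x1 \<and> P1"
            from F1 a have "(p!0 = x1 \<and> p!1 = b1) \<or> (p!(L-1) = x1 \<and> p!(L-2) = b1)" by blast
            then show False
            proof
              assume "p!0 = x1 \<and> p!1 = b1"
              then show False using a that idx[of 0 i] idx[of 0 "Suc i"] i F by auto
            next
              assume "p!(L-1) = x1 \<and> p!(L-2) = b1"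
              then show False using a that idx[of "L-1" i] idx[of "L-1" "Suc i"] i F L2 li
                by (auto simp: insert_commute)
            qed
          qed
          moreover have "\<not> (v = x2 \<and> P2)"
          proof
            assume a: "v = x2 \<and> P2"
            from F2 a have "(p!0 = x2 \<and> p!1 = b2) \<or> (p!(L-1) = x2 \<and> p!(L-2) = b2)" by blast
            then show False
            proof
              assume "p!0 = x2 \<and> p!1 = b2"
              then show False using a that idx[of 0 i] idx[of 0 "Suc i"] i F2' by auto
            next
              assume "p!(L-1) = x2 \<and> p!(L-2) = b2"
              then show False using a that idx[of "L-1" i] idx[of "L-1" "Suc i"] i F2' L2 li
                by (auto simp: insert_commute)
            qed
          qed
          ultimately show ?thesis unfolding \<sigma>_def by auto
        qed
        then show ?thesis using F F2' inE0 E' unfolding g_def swp_def by auto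
      qed
    qed
  qed
  have lenq: "length q = L" using q_def L_def by simp
  have qi: "\<And>i. i < L \<Longrightarrow> q!i = \<sigma> (p!i)" using q_def L_def by simp
  have sig: "\<sigma> v = v \<or> \<sigma> v = y1 \<or> \<sigma> v = y2" for v unfolding \<sigma>_def by auto
  have dE': "deg E' (\<sigma> v) \<noteq> 2" if "deg E v \<noteq> 2" for v
    using sig[of v] that degs dy1 dy2 by metis
  have "segment_path n E' q"
    unfolding segment_path_def
  proof (intro conjI allI impI)
    show "2 \<le> length q" using lenq L2 by simp
    show "distinct q" unfolding q_def distinct_map
    proof
      show "distinct p" by (rule dist)
      show "inj_on \<sigma> (set p)" unfolding inj_on_def
      proof (intro ballI impI)
        fix u v assume uv: "u \<in> set p" "v \<in> set p" "\<sigma> u = \<sigma> v"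
        show "u = v"
        proof (cases "x1 = x2")
          case True
          then show ?thesis using uv K1 K2 K4 unfolding \<sigma>_def by (auto split: if_splits)
        next
          case False
          then show ?thesis using uv K1 K2 K3 ne unfolding \<sigma>_def by (auto split: if_splits)
        qed
      qed
    qed
    show "set q \<subseteq> {..<n}" using setp yn sig unfolding q_def by (auto) (metis lessThan_iff subsetD)
    show "{q ! i, q ! Suc i} \<in> E'" if "Suc i < length q" for i
      using EC[of i] qi[of i] qi[of "Suc i"] that lenq by simp
    show "deg E' (hd q) \<noteq> 2"
    proof -
      have "hd q = \<sigma> (hd p)" using q_def L2 L_def by (cases p) auto
      moreover have "deg E (hd p) \<noteq> 2" using sp by (simp add: segment_path_def)
      ultimately show ?thesis using dE' by simp
    qed
    show "deg E' (last q) \<noteq> 2"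
    proof -
      have "p \<noteq> []" using L2 L_def by auto
      then have "last q = \<sigma> (last p)" using q_def by (simp add: last_map)
      moreover have "deg E (last p) \<noteq> 2" using sp by (simp add: segment_path_def)
      ultimately show ?thesis using dE' by simp
    qed
    show "deg E' (q ! i) = 2" if "0 < i \<and> Suc i < length q" for i
    proof -
      have d2: "deg E (p!i) = 2" using sp that lenq L_def by (simp add: segment_path_def)
      then have "p!i \<noteq> x1" "p!i \<noteq> x2" using dx1 dx2 by auto
      then have "\<sigma> (p!i) = p!i" unfolding \<sigma>_def by auto
      then show ?thesis using qi[of i] that lenq d2 degs by simp
    qed
  qed
  moreover have "path_edges q = g ` path_edges p"
  proof
    show "path_edges q \<subseteq> g ` path_edges p"
    proof
      fix e assume "e \<in> path_edges q"
      then obtain i where i: "e = {q!i, q!Suc i}" "Suc i < length q" by (auto simp: path_edges_def)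
      then have "e = g {p!i, p!Suc i}" using EC[of i] qi[of i] qi[of "Suc i"] lenq by simp
      moreover have "{p!i, p!Suc i} \<in> path_edges p" using i lenq L_def by (auto simp: path_edges_def)
      ultimately show "e \<in> g ` path_edges p" by blast
    qed
  next
    show "g ` path_edges p \<subseteq> path_edges q"
    proof
      fix e assume "e \<in> g ` path_edges p"
      then obtain i where i: "e = g {p!i, p!Suc i}" "Suc i < L" by (auto simp: path_edges_def L_def)
      then have "e = {q!i, q!Suc i}" using EC[of i] qi[of i] qi[of "Suc i"] lenq by simp
      then show "e \<in> path_edges q" using i lenq by (auto simp: path_edges_def)
    qed
  qed
  ultimately show ?thesis unfolding g_def by blast
qed

lemma seg_sub_pow: "segments n E \<subseteq> Pow E"
proof
  fix S assume "S \<in> segments n E"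
  then obtain p where "segment_path n E p" "S = path_edges p" unfolding segments_def by blast
  then show "S \<in> Pow E" using seg_pe_sub by blast
qed

lemma seg_card_le:
  assumes inj: "inj_on g E" and fin: "finite E'"
    and sub: "(image g) ` segments n E \<subseteq> segments n E'"
  shows "card (segments n E) \<le> card (segments n E')"
proof -
  have i1: "inj_on (image g) (Pow E)" using inj_on_image_Pow[OF inj] .
  have i2: "inj_on (image g) (segments n E)"
    by (rule inj_on_subset[OF i1 seg_sub_pow])
  have c1: "card ((image g) ` segments n E) = card (segments n E)" by (rule card_image[OF i2])
  have f: "finite (segments n E')" by (rule finite_subset[OF seg_sub_pow]) (use fin in simp)
  have "card ((image g) ` segments n E) \<le> card (segments n E')" by (rule card_mono[OF f sub])
  then show ?thesis using c1 by simp
qed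

lemma swp_inj:
  assumes "n1 \<notin> E" "n2 \<notin> E" "n1 \<noteq> n2"
  shows "inj_on (swp m1 n1 m2 n2) E"
proof (rule inj_onI)
  fix a b assume ab: "a \<in> E" "b \<in> E" "swp m1 n1 m2 n2 a = swp m1 n1 m2 n2 b"
  show "a = b"
  proof (cases "a = m1 \<or> a = m2")
    case True
    then show ?thesis
    proof
      assume a: "a = m1"
      then have "swp m1 n1 m2 n2 a = n1" by (simp add: swp_def)
      then show ?thesis using ab assms a unfolding swp_def by (metis)
    next
      assume a: "a = m2"
      then have "swp m1 n1 m2 n2 a = (if m2 = m1 then n1 else n2)" by (simp add: swp_def)
      then show ?thesis using ab assms a unfolding swp_def by (metis)
    qed
  next
    case False
    then have "swp m1 n1 m2 n2 a = a" by (simp add: swp_def)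
    then show ?thesis using ab assms False unfolding swp_def by (metis)
  qed
qed

lemma seg_card_eq:
  fixes E E' E0 :: "nat set set"
  assumes E0: "E0 = E - {{x1,b1},{x2,b2}}"
  and E': "E' = E0 \<union> {{y1,b1},{y2,b2}}"
  and inE: "{x1,b1} \<in> E" "{x2,b2} \<in> E" and nE: "{y1,b1} \<notin> E" "{y2,b2} \<notin> E"
  and degs: "\<And>v. (deg E' v = 2) = (deg E v = 2)"
  and dx1: "deg E x1 \<noteq> 2" and dx2: "deg E x2 \<noteq> 2" and dy1: "deg E y1 \<noteq> 2" and dy2: "deg E y2 \<noteq> 2"
  and ne: "y1 \<noteq> x1" "y1 \<noteq> x2" "y2 \<noteq> x1" "y2 \<noteq> x2" "b1 \<noteq> b2"
     "b1 \<noteq> x1" "b1 \<noteq> x2" "b2 \<noteq> x1" "b2 \<noteq> x2"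
     "b1 \<noteq> y1" "b1 \<noteq> y2" "b2 \<noteq> y1" "b2 \<noteq> y2"
  and xn: "x1 < n" "x2 < n"
  and yn: "y1 < n" "y2 < n"
  and r1: "(b1,y1) \<notin> (adj E0)\<^sup>*" and r2: "(b2,y2) \<notin> (adj E0)\<^sup>*"
  and r3: "y1 = y2 \<Longrightarrow> (b1,b2) \<notin> (adj E0)\<^sup>*"
  and s1: "(b1,x1) \<notin> (adj E0)\<^sup>*" and s2: "(b2,x2) \<notin> (adj E0)\<^sup>*"
  and s3: "x1 = x2 \<Longrightarrow> (b1,b2) \<notin> (adj E0)\<^sup>*"
  and fin: "finite E"
  shows "card (segments n E') = card (segments n E)"
proof -
  have finE0: "finite E0" using fin E0 by simp
  have finE': "finite E'" using finE0 E' by simp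
  have yb: "{y1,b1} \<noteq> {y2,b2}" using ne by (auto simp: doubleton_eq_iff)
  have xb: "{x1,b1} \<noteq> {x2,b2}" using ne by (auto simp: doubleton_eq_iff)
  have A: "(image (swp {x1,b1} {y1,b1} {x2,b2} {y2,b2})) ` segments n E \<subseteq> segments n E'"
  proof
    fix S assume "S \<in> (image (swp {x1,b1} {y1,b1} {x2,b2} {y2,b2})) ` segments n E"
    then obtain S0 where S0: "S0 \<in> segments n E" "S = swp {x1,b1} {y1,b1} {x2,b2} {y2,b2} ` S0"
      by blast
    then obtain p where p: "segment_path n E p"
      "S = swp {x1,b1} {y1,b1} {x2,b2} {y2,b2} ` path_edges p"
      unfolding segments_def by blast
    obtain q where "segment_path n E' q"
      "path_edges q = swp {x1,b1} {y1,b1} {x2,b2} {y2,b2} ` path_edges p"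
      using swap_seg[OF E0 E' degs dx1 dx2 dy1 dy2 ne(1-9) yn r1 r2 r3 p(1)] by blast
    then show "S \<in> segments n E'" using p(2) unfolding segments_def by blast
  qed
  have E0': "E0 = E' - {{y1,b1},{y2,b2}}" using E' E0 nE by auto
  have E'': "E = E0 \<union> {{x1,b1},{x2,b2}}" using E0 inE by auto
  have degs': "\<And>v. (deg E v = 2) = (deg E' v = 2)" using degs by simp
  have B: "(image (swp {y1,b1} {x1,b1} {y2,b2} {x2,b2})) ` segments n E' \<subseteq> segments n E"
  proof
    fix S assume "S \<in> (image (swp {y1,b1} {x1,b1} {y2,b2} {x2,b2})) ` segments n E'"
    then obtain S0 where S0: "S0 \<in> segments n E'" "S = swp {y1,b1} {x1,b1} {y2,b2} {x2,b2} ` S0"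
      by blast
    then obtain p where p: "segment_path n E' p"
      "S = swp {y1,b1} {x1,b1} {y2,b2} {x2,b2} ` path_edges p"
      unfolding segments_def by blast
    have ne': "x1 \<noteq> y1" "x1 \<noteq> y2" "x2 \<noteq> y1" "x2 \<noteq> y2" "b1 \<noteq> b2"
      "b1 \<noteq> y1" "b1 \<noteq> y2" "b2 \<noteq> y1" "b2 \<noteq> y2" using ne by auto
    have d': "deg E' y1 \<noteq> 2" "deg E' y2 \<noteq> 2" "deg E' x1 \<noteq> 2" "deg E' x2 \<noteq> 2"
      using degs dx1 dx2 dy1 dy2 by auto
    obtain q where "segment_path n E q"
      "path_edges q = swp {y1,b1} {x1,b1} {y2,b2} {x2,b2} ` path_edges p"
      using swap_seg[OF E0' E'' degs' d' ne' xn s1 s2 s3 p(1)] by blast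
    then show "S \<in> segments n E" using p(2) unfolding segments_def by blast
  qed
  have nE'1: "{x1,b1} \<notin> E'"
  proof -
    have "{x1,b1} \<noteq> {y1,b1}" "{x1,b1} \<noteq> {y2,b2}" using ne by (auto simp: doubleton_eq_iff)
    then show ?thesis using E' E0 by blast
  qed
  have nE'2: "{x2,b2} \<notin> E'"
  proof -
    have "{x2,b2} \<noteq> {y1,b1}" "{x2,b2} \<noteq> {y2,b2}" using ne by (auto simp: doubleton_eq_iff)
    then show ?thesis using E' E0 by blast
  qed
  note nE' = nE'1 nE'2
  have "card (segments n E) \<le> card (segments n E')"
    by (rule seg_card_le[OF swp_inj[OF nE yb] finE' A])
  moreover have "card (segments n E') \<le> card (segments n E)"
    by (rule seg_card_le[OF swp_inj[OF nE' xb] fin B])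
  ultimately show ?thesis by simp
qed

lemma median:
  assumes "(u2,z) \<in> (adj T)\<^sup>*" "u1 \<noteq> u2"
  shows "(u1,z) \<in> (adj {e\<in>T. u2 \<notin> e})\<^sup>* \<or> (u2,z) \<in> (adj {e\<in>T. u1 \<notin> e})\<^sup>*"
  using assms(1)
proof (induction rule: rtrancl_induct)
  case base then show ?case by simp
next
  case (step w z)
  have wz: "{w,z} \<in> T" using step(2) by (simp add: adj_def)
  show ?case
  proof (cases "z = u1 \<or> z = u2")
    case True then show ?thesis by (metis rtrancl.rtrancl_refl)
  next
    case False
    from step(3) show ?thesis
    proof
      assume h: "(u1, w) \<in> (adj {e \<in> T. u2 \<notin> e})\<^sup>*"
      show ?thesis
      proof (cases "w = u2")
        case True
        then have "{u2,z} \<in> T" using wz by simp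
        moreover have "u1 \<notin> {u2,z}" using False assms(2) by simp
        ultimately have "{u2,z} \<in> {e\<in>T. u1 \<notin> e}" by simp
        then show ?thesis by (rule disjI2[OF edge_rt])
      next
        case False2: False
        then have "u2 \<notin> {w,z}" using False by simp
        then have "{w,z} \<in> {e\<in>T. u2 \<notin> e}" using wz by simp
        then show ?thesis by (rule disjI1[OF rt_step[OF h]])
      qed
    next
      assume h: "(u2, w) \<in> (adj {e \<in> T. u1 \<notin> e})\<^sup>*"
      show ?thesis
      proof (cases "w = u1")
        case True
        then have "{u1,z} \<in> T" using wz by simp
        moreover have "u2 \<notin> {u1,z}" using False assms(2) by simp
        ultimately have "{u1,z} \<in> {e\<in>T. u2 \<notin> e}" by simp
        then show ?thesis by (rule disjI1[OF edge_rt])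
      next
        case False2: False
        then have "u1 \<notin> {w,z}" using False by simp
        then have "{w,z} \<in> {e\<in>T. u1 \<notin> e}" using wz by simp
        then show ?thesis by (rule disjI2[OF rt_step[OF h]])
      qed
    qed
  qed
qed

lemma avoid: "(y,w) \<in> (adj {e\<in>T. x \<notin> e})\<^sup>* \<Longrightarrow> y \<noteq> x \<Longrightarrow> w \<noteq> x"
proof (induction rule: rtrancl_induct)
  case base then show ?case by simp
next
  case (step w z)
  then show ?case by (auto simp: adj_def)
qed

lemma first_nb:
  assumes "(y,z) \<in> (adj T)\<^sup>*" "y \<noteq> x"
  shows "(y,z) \<in> (adj {e\<in>T. x \<notin> e})\<^sup>* \<or> (\<exists>a. {a,x} \<in> T \<and> (y,a) \<in> (adj {e\<in>T. x \<notin> e})\<^sup>*)"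
  using assms(1)
proof (induction rule: rtrancl_induct)
  case base then show ?case by simp
next
  case (step w z)
  have wz: "{w,z} \<in> T" using step(2) by (simp add: adj_def)
  from step(3) show ?case
  proof
    assume h: "(y, w) \<in> (adj {e \<in> T. x \<notin> e})\<^sup>*"
    have wx: "w \<noteq> x" using avoid[OF h assms(2)] .
    show ?thesis
    proof (cases "z = x")
      case True then show ?thesis using wz h by blast
    next
      case False
      then have "{w,z} \<in> {e\<in>T. x \<notin> e}" using wz wx by auto
      then show ?thesis using rt_step h by blast
    qed
  next
    assume "\<exists>a. {a, x} \<in> T \<and> (y, a) \<in> (adj {e \<in> T. x \<notin> e})\<^sup>*"
    then show ?thesis by blast
  qed
qed

lemma deg_insert:
  assumes "finite A" "p \<notin> A"
  shows "deg (insert p A) v = deg A v + (if v \<in> p then 1 else 0)"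
proof -
  have eq: "{e\<in>insert p A. v\<in>e} = (if v\<in>p then insert p {e\<in>A. v\<in>e} else {e\<in>A. v\<in>e})" by auto
  have "finite {e\<in>A. v\<in>e}" using assms(1) by simp
  moreover have "p \<notin> {e\<in>A. v\<in>e}" using assms(2) by simp
  ultimately have "card (insert p {e\<in>A. v\<in>e}) = Suc (card {e\<in>A. v\<in>e})"
    by (rule card_insert_disjoint)
  then show ?thesis unfolding deg_def eq by simp
qed

lemma deg_union2:
  assumes "finite A" "p \<notin> A" "q \<notin> A" "p \<noteq> q"
  shows "deg (A \<union> {p,q}) v = deg A v + (if v \<in> p then 1 else 0) + (if v \<in> q then 1 else 0)"
proof -
  have "A \<union> {p,q} = insert p (insert q A)" by auto
  moreover have "deg (insert p (insert q A)) v = deg (insert q A) v + (if v \<in> p then 1 else 0)"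
    using deg_insert[of "insert q A" p v] assms by simp
  moreover have "deg (insert q A) v = deg A v + (if v \<in> q then 1 else 0)"
    using deg_insert[of A q v] assms by simp
  ultimately show ?thesis by simp
qed

lemma deg_pos: "finite T \<Longrightarrow> e \<in> T \<Longrightarrow> v \<in> e \<Longrightarrow> 1 \<le> deg T v"
proof -
  assume a: "finite T" "e \<in> T" "v \<in> e"
  then have "{e\<in>T. v\<in>e} \<noteq> {}" "finite {e\<in>T. v\<in>e}" by auto
  then show ?thesis unfolding deg_def by (simp add: Suc_le_eq card_gt_0_iff)
qed

lemma nonleaf_nb:
  assumes fin: "finite T" and conn: "(y,x) \<in> (adj T)\<^sup>*" and yx: "y \<noteq> x" and dx: "2 \<le> deg T x"
  shows "\<exists>w. {y,w} \<in> T \<and> 2 \<le> deg T w"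
proof (rule ccontr)
  assume "\<not> ?thesis"
  then have small: "\<And>w. {y,w} \<in> T \<Longrightarrow> deg T w \<le> 1"
    by (metis not_less_eq_eq numeral_2_eq_2 One_nat_def)
  define C where "C = insert y {w. {y,w} \<in> T}"
  have "z \<in> C" if "(y,z) \<in> (adj T)\<^sup>*" for z
    using that
  proof (induction rule: rtrancl_induct)
    case base then show ?case by (simp add: C_def)
  next
    case (step w z)
    have wz: "{w,z} \<in> T" using step(2) by (simp add: adj_def)
    show ?case
    proof (cases "w = y")
      case True then show ?thesis using wz C_def by auto
    next
      case False
      then have yw: "{y,w} \<in> T" using step(3) C_def by auto
      have "deg T w \<le> 1" using small[OF yw] .
      then have "\<forall>a1\<in>{e\<in>T. w\<in>e}. \<forall>a2\<in>{e\<in>T. w\<in>e}. a1 = a2"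
        using card_le_Suc0_iff_eq[of "{e\<in>T. w\<in>e}"] fin unfolding deg_def by simp
      then have "{w,z} = {y,w}" using wz yw by simp
      then have "z = y \<or> z = w" by (auto simp: doubleton_eq_iff)
      then show ?thesis using step(3) C_def by auto
    qed
  qed
  then have "x \<in> C" using conn by blast
  then have "{y,x} \<in> T" using yx C_def by auto
  then have "deg T x \<le> 1" by (rule small)
  then show False using dx by simp
qed

lemma sum3:
  assumes "finite A" "x \<in> A" "y \<in> A" "z \<in> A" "x \<noteq> y" "x \<noteq> z" "y \<noteq> z"
  shows "sum f A = f x + f y + f z + sum f (A - {x,y,z})"
proof -
  have "sum f A = sum f (A - {x,y,z}) + sum f {x,y,z}"
    using sum.subset_diff[of "{x,y,z}" A f] assms by simp
  also have "sum f {x,y,z} = f x + f y + f z" using assms by (simp add: add.assoc)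
  finally show ?thesis by (simp add: add_ac)
qed

lemma sum_ind: "finite A \<Longrightarrow> (\<Sum>e\<in>A. if v \<in> e then (1::int) else 0) = int (deg A v)"
proof -
  assume f: "finite A"
  have "A \<inter> {e. v \<in> e} = {e\<in>A. v\<in>e}" by blast
  then show ?thesis unfolding deg_def using f by (simp add: sum.If_cases)
qed

lemma edge_gain:
  fixes d d' :: "nat \<Rightarrow> nat"
  assumes uv: "u \<noteq> v" and dx: "d x = 3" and dy1: "d y1 = 3" and dy2: "d y2 = 3"
    and ne: "x \<noteq> y1" "x \<noteq> y2" "y1 \<noteq> y2"
    and bu: "1 \<le> d u" "d u \<le> 4" and bv: "1 \<le> d v" "d v \<le> 4"
    and d': "\<And>z. d' z = (if z = x then 1 else if z = y1 \<or> z = y2 then 4 else d z)"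
  shows "(if y1 = u \<or> y1 = v then 1 else 0) + (if y2 = u \<or> y2 = v then 1 else 0)
           - 8 * (if x = u \<or> x = v then 1 else 0) \<le> int (d' u * d' v) - int (d u * d v)"
proof -
  have ex: "d' x = 1" "d' y1 = 4" "d' y2 = 4" using d' ne by auto
  have eo: "d' z = d z" if "z \<noteq> x" "z \<noteq> y1" "z \<noteq> y2" for z using d' that by simp
  show ?thesis
  proof (cases "u = x")
    case ux: True
    show ?thesis
    proof (cases "v = y1 \<or> v = y2")
      case True then show ?thesis using ux ex dx dy1 dy2 ne uv by auto
    next
      case False
      then have "d' v = d v" using eo uv ux by simp
      then show ?thesis using ux ex dx ne uv False bv by simp
    qed
  next
    case unx: False
    show ?thesis
    proof (cases "u = y1 \<or> u = y2")
      case uy: True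
      show ?thesis
      proof (cases "v = x")
        case True then show ?thesis using uy ex dx dy1 dy2 ne uv by auto
      next
        case vnx: False
        show ?thesis
        proof (cases "v = y1 \<or> v = y2")
          case True then show ?thesis using uy ex dx dy1 dy2 ne uv by auto
        next
          case False
          then have "d' v = d v" using eo vnx by simp
          then show ?thesis using uy ex dx dy1 dy2 ne uv False vnx bv by auto
        qed
      qed
    next
      case uo: False
      have du: "d' u = d u" using eo unx uo by simp
      show ?thesis
      proof (cases "v = x")
        case True then show ?thesis using uo unx du ex dx ne bu by simp
      next
        case vnx: False
        show ?thesis
        proof (cases "v = y1 \<or> v = y2")
          case True then show ?thesis using uo unx du ex dy1 dy2 ne bu vnx by auto
        next
          case False
          then have "d' v = d v" using eo vnx by simp
          then show ?thesis using uo unx du False vnx by simp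
        qed
      qed
    qed
  qed
qed


lemma edge_gain_star:
  fixes d d' :: "nat \<Rightarrow> nat"
  assumes yv: "y1 \<noteq> v" and dx: "d x = 3" and dy1: "d y1 = 3" and dy2: "d y2 = 3"
    and ne: "x \<noteq> y1" "x \<noteq> y2" "y1 \<noteq> y2"
    and bv: "2 \<le> d v" "d v \<le> 4"
    and d': "\<And>z. d' z = (if z = x then 1 else if z = y1 \<or> z = y2 then 4 else d z)"
  shows "2 + (if y2 = v then 1 else 0) - 8 * (if x = v then 1 else 0) \<le> int (d' y1 * d' v) - int (d y1 * d v)"
proof -
  have ex: "d' x = 1" "d' y1 = 4" "d' y2 = 4" using d' ne by auto
  show ?thesis
  proof (cases "v = x")
    case True then show ?thesis using ex dx dy1 ne by simp
  next
    case vx: False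
    show ?thesis
    proof (cases "v = y2")
      case True then show ?thesis using ex dy1 dy2 ne by simp
    next
      case False
      then have "d' v = d v" using d' vx yv by simp
      then show ?thesis using ex dy1 ne False vx bv by simp
    qed
  qed
qed

lemma card2_pair: "card e = 2 \<Longrightarrow> x \<in> e \<Longrightarrow> \<exists>b. e = {x,b} \<and> b \<noteq> x"
  by (metis card_2_iff insert_commute insertE singletonD)

lemma core:
  fixes T :: "nat set set"
  assumes ct: "chemical_tree n T"
    and xn: "x < n" and y1n: "y1 < n" and y2n: "y2 < n"
    and ne: "x \<noteq> y1" "x \<noteq> y2" "y1 \<noteq> y2"
    and dx: "deg T x = 3" and dy1: "deg T y1 = 3" and dy2: "deg T y2 = 3"
    and yy: "(y1,y2) \<in> (adj {e\<in>T. x \<notin> e})\<^sup>*"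
  shows "\<exists>T'. chemical_tree n T' \<and> card (segments n T') = card (segments n T) \<and>
              M1 n T < M1 n T' \<and> M2 T < M2 T'"
proof -
  have gr: "is_graph n T" and cT: "card T = n - 1" and n1: "1 \<le> n"
    using ct unfolding chemical_tree_def is_tree_def by auto
  have conn: "\<And>u v. u < n \<Longrightarrow> v < n \<Longrightarrow> (u,v) \<in> (adj T)\<^sup>*"
    using ct unfolding chemical_tree_def is_tree_def by auto
  have d4: "\<And>v. v < n \<Longrightarrow> deg T v \<le> 4"
    using ct unfolding chemical_tree_def by auto
  have eT: "\<And>e. e \<in> T \<Longrightarrow> e \<subseteq> {..<n} \<and> card e = 2" using gr unfolding is_graph_def by blast
  have finT: "finite T"
  proof (rule finite_subset)
    show "T \<subseteq> Pow {..<n}" using eT by blast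
  qed simp
  define G where "G = {e\<in>T. x \<notin> e}"
  have y1xT: "(y1,x) \<in> (adj T)\<^sup>*" using conn y1n xn by simp
  have nG: "(y1,x) \<notin> (adj G)\<^sup>*" using avoid[of y1 x T x] ne unfolding G_def by auto
  obtain a where a: "{a,x} \<in> T" "(y1,a) \<in> (adj G)\<^sup>*"
    using first_nb[OF y1xT, of x] ne nG unfolding G_def by auto
  have ax: "a \<noteq> x" using avoid[of y1 a T x] a(2) ne unfolding G_def by auto
  define N where "N = {e\<in>T. x\<in>e}"
  have cN: "card N = 3" using dx unfolding N_def deg_def by simp
  have aN: "{a,x} \<in> N" using a(1) N_def by simp
  have finN: "finite N" using finT N_def by simp
  have "card (N - {{a,x}}) = 2" using cN aN finN by (simp add: card_Diff_singleton)
  then obtain e1 e2 where e12: "N - {{a,x}} = {e1,e2}" "e1 \<noteq> e2" by (auto simp: card_2_iff)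
  have e1: "e1 \<in> T" "x \<in> e1" "e1 \<noteq> {a,x}" using e12 N_def by blast+
  have e2: "e2 \<in> T" "x \<in> e2" "e2 \<noteq> {a,x}" using e12 N_def by blast+
  obtain b where b: "e1 = {x,b}" "b \<noteq> x" using card2_pair[of e1 x] eT e1 by blast
  obtain c where c: "e2 = {x,c}" "c \<noteq> x" using card2_pair[of e2 x] eT e2 by blast
  have ba: "b \<noteq> a" using e1(3) b by (auto simp: insert_commute)
  have ca: "c \<noteq> a" using e2(3) c by (auto simp: insert_commute)
  have bc: "b \<noteq> c" using e12(2) b c by auto
  have xbT: "{x,b} \<in> T" "{x,c} \<in> T" using e1 e2 b c by auto
  define E0 where "E0 = T - {{x,b},{x,c}}"
  have xbxc: "{x,b} \<noteq> {x,c}" using bc by (simp add: doubleton_eq_iff)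
  have TE0: "T = insert {x,b} (insert {x,c} E0)" using xbT E0_def by auto
  have TE0': "T = E0 \<union> {{x,b},{x,c}}" using xbT E0_def by auto
  have nxb: "{x,b} \<notin> E0" "{x,c} \<notin> E0" by (auto simp: E0_def)
  have finE0: "finite E0" using finT E0_def by simp
  have cTE: "card T = card E0 + 2" using TE0 finE0 nxb xbxc by simp
  have n3: "3 \<le> n" using cTE cT n1 by simp
  have cE0: "card E0 = n - 3" using cTE cT by simp
  have e2E0: "\<forall>e\<in>E0. \<exists>s t. e = {s,t}"
  proof
    fix e assume "e \<in> E0"
    then have "card e = 2" using eT E0_def by simp
    then show "\<exists>s t. e = {s,t}" by (meson card_2_iff)
  qed
  have GE0: "G \<subseteq> E0" unfolding G_def E0_def by auto
  have axE0: "{a,x} \<in> E0" using a(1) ba ca ax unfolding E0_def by (auto simp: doubleton_eq_iff)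
  have reach3: "(v,x) \<in> (adj E0)\<^sup>* \<or> (v,b) \<in> (adj E0)\<^sup>* \<or> (v,c) \<in> (adj E0)\<^sup>*" if vn: "v < n" for v
  proof -
    have "(v,x) \<in> (adj (insert {x,b} (insert {x,c} E0)))\<^sup>*" using conn[OF vn xn] TE0 by simp
    from prefix_lem[OF this]
    have "(v,x) \<in> (adj (insert {x,c} E0))\<^sup>* \<or> (v,b) \<in> (adj (insert {x,c} E0))\<^sup>*" by blast
    then show ?thesis
    proof
      assume "(v,x) \<in> (adj (insert {x,c} E0))\<^sup>*"
      from prefix_lem[OF this] show ?thesis by blast
    next
      assume "(v,b) \<in> (adj (insert {x,c} E0))\<^sup>*"
      from prefix_lem[OF this] show ?thesis by blast
    qed
  qed
  have cnt: "n \<le> card E0 + card S"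
    if "finite S" "\<forall>v\<in>{..<n}. \<exists>z\<in>S. (v,z) \<in> (adj E0)\<^sup>*" for S
    using count_comp[OF finE0 e2E0 that] by simp
  have two: "card {p,q} \<le> 2" for p q :: nat by (simp add: card_insert_if)
  have nbx: "(b,x) \<notin> (adj E0)\<^sup>*"
  proof
    assume h: "(b,x) \<in> (adj E0)\<^sup>*"
    have "\<forall>v\<in>{..<n}. \<exists>z\<in>{x,c}. (v,z) \<in> (adj E0)\<^sup>*"
    proof
      fix v assume "v \<in> {..<n}"
      then have "(v,x) \<in> (adj E0)\<^sup>* \<or> (v,b) \<in> (adj E0)\<^sup>* \<or> (v,c) \<in> (adj E0)\<^sup>*" using reach3 by simp
      then show "\<exists>z\<in>{x,c}. (v,z) \<in> (adj E0)\<^sup>*"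
      proof (elim disjE)
        assume "(v,b) \<in> (adj E0)\<^sup>*"
        then have "(v,x) \<in> (adj E0)\<^sup>*" by (rule rtrancl_trans[OF _ h])
        then show ?thesis by blast
      qed blast+
    qed
    then have "n \<le> card E0 + card {x,c}" using cnt by simp
    then show False using cE0 n3 two[of x c] by simp
  qed
  have ncx: "(c,x) \<notin> (adj E0)\<^sup>*"
  proof
    assume h: "(c,x) \<in> (adj E0)\<^sup>*"
    have "\<forall>v\<in>{..<n}. \<exists>z\<in>{x,b}. (v,z) \<in> (adj E0)\<^sup>*"
    proof
      fix v assume "v \<in> {..<n}"
      then have "(v,x) \<in> (adj E0)\<^sup>* \<or> (v,b) \<in> (adj E0)\<^sup>* \<or> (v,c) \<in> (adj E0)\<^sup>*" using reach3 by simp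
      then show "\<exists>z\<in>{x,b}. (v,z) \<in> (adj E0)\<^sup>*"
      proof (elim disjE)
        assume "(v,c) \<in> (adj E0)\<^sup>*"
        then have "(v,x) \<in> (adj E0)\<^sup>*" by (rule rtrancl_trans[OF _ h])
        then show ?thesis by blast
      qed blast+
    qed
    then have "n \<le> card E0 + card {x,b}" using cnt by simp
    then show False using cE0 n3 two[of x b] by simp
  qed
  have nbc: "(b,c) \<notin> (adj E0)\<^sup>*"
  proof
    assume h: "(b,c) \<in> (adj E0)\<^sup>*"
    have "\<forall>v\<in>{..<n}. \<exists>z\<in>{x,c}. (v,z) \<in> (adj E0)\<^sup>*"
    proof
      fix v assume "v \<in> {..<n}"
      then have "(v,x) \<in> (adj E0)\<^sup>* \<or> (v,b) \<in> (adj E0)\<^sup>* \<or> (v,c) \<in> (adj E0)\<^sup>*" using reach3 by simp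
      then show "\<exists>z\<in>{x,c}. (v,z) \<in> (adj E0)\<^sup>*"
      proof (elim disjE)
        assume "(v,b) \<in> (adj E0)\<^sup>*"
        then have "(v,c) \<in> (adj E0)\<^sup>*" by (rule rtrancl_trans[OF _ h])
        then show ?thesis by blast
      qed blast+
    qed
    then have "n \<le> card E0 + card {x,c}" using cnt by simp
    then show False using cE0 n3 two[of x c] by simp
  qed
  have y1a: "(y1,a) \<in> (adj E0)\<^sup>*" by (rule rt_mono[OF GE0 a(2)])
  have y1x: "(y1,x) \<in> (adj E0)\<^sup>*" by (rule rt_step[OF y1a axE0])
  have y2y1: "(y2,y1) \<in> (adj E0)\<^sup>*" using rt_mono[OF GE0 rt_sym[OF yy[folded G_def]]] .
  have y2x: "(y2,x) \<in> (adj E0)\<^sup>*" by (rule rtrancl_trans[OF y2y1 y1x])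
  have r1: "(b,y1) \<notin> (adj E0)\<^sup>*"
  proof
    assume "(b,y1) \<in> (adj E0)\<^sup>*"
    then have "(b,x) \<in> (adj E0)\<^sup>*" by (rule rtrancl_trans[OF _ y1x])
    then show False using nbx by simp
  qed
  have r2: "(c,y2) \<notin> (adj E0)\<^sup>*"
  proof
    assume "(c,y2) \<in> (adj E0)\<^sup>*"
    then have "(c,x) \<in> (adj E0)\<^sup>*" by (rule rtrancl_trans[OF _ y2x])
    then show False using ncx by simp
  qed
  have by1: "b \<noteq> y1" using nbx y1x by auto
  have by2: "b \<noteq> y2" using nbx y2x by auto
  have cy1: "c \<noteq> y1" using ncx y1x by auto
  have cy2: "c \<noteq> y2" using ncx y2x by auto
  have nT1: "{y1,b} \<notin> T"
  proof
    assume h: "{y1,b} \<in> T"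
    have "{y1,b} \<noteq> {x,b}" "{y1,b} \<noteq> {x,c}" using ne by1 cy1 by (auto simp: doubleton_eq_iff)
    then have "{b,y1} \<in> E0" using h E0_def by (simp add: insert_commute)
    then show False using r1 edge_rt by metis
  qed
  have nT2: "{y2,c} \<notin> T"
  proof
    assume h: "{y2,c} \<in> T"
    have "{y2,c} \<noteq> {x,b}" "{y2,c} \<noteq> {x,c}" using ne by2 cy2 by (auto simp: doubleton_eq_iff)
    then have "{c,y2} \<in> E0" using h E0_def by (simp add: insert_commute)
    then show False using r2 edge_rt by metis
  qed
  have ybyc: "{y1,b} \<noteq> {y2,c}" using ne bc by2 cy1 by (auto simp: doubleton_eq_iff)
  define T' where "T' = E0 \<union> {{y1,b},{y2,c}}"
  have nE01: "{y1,b} \<notin> E0" "{y2,c} \<notin> E0" using nT1 nT2 E0_def by auto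
  have degT: "deg T v = deg E0 v + (if v \<in> {x,b} then 1 else 0) + (if v \<in> {x,c} then 1 else 0)" for v
    using deg_union2[OF finE0 nxb(1) nxb(2) xbxc] TE0' by simp
  have degT': "deg T' v = deg E0 v + (if v \<in> {y1,b} then 1 else 0) + (if v \<in> {y2,c} then 1 else 0)" for v
    using deg_union2[OF finE0 nE01 ybyc] T'_def by simp
  have dE0x: "deg E0 x = 1" using degT[of x] dx by simp
  have dE0y1: "deg E0 y1 = 3" using degT[of y1] dy1 ne by1 cy1 by auto
  have dE0y2: "deg E0 y2 = 3" using degT[of y2] dy2 ne by2 cy2 by auto
  have dform: "deg T' z = (if z = x then 1 else if z = y1 \<or> z = y2 then 4 else deg T z)" for z
  proof (cases "z = x")
    case True then show ?thesis using degT'[of z] dE0x ne b c by auto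
  next
    case zx: False
    show ?thesis
    proof (cases "z = y1")
      case True then show ?thesis using degT'[of z] dE0y1 ne cy1 by auto
    next
      case zy1: False
      show ?thesis
      proof (cases "z = y2")
        case True then show ?thesis using degT'[of z] dE0y2 ne by2 by auto
      next
        case False
        then show ?thesis using degT'[of z] degT[of z] zx zy1 by auto
      qed
    qed
  qed
  have bn: "b < n" "c < n" using eT[OF xbT(1)] eT[OF xbT(2)] by auto
  have TT': "T' = insert {y1,b} (insert {y2,c} E0)" using T'_def by auto
  have cT': "card T' = n - 1" using TT' finE0 nE01 ybyc cE0 n3 by simp
  have gr': "is_graph n T'" unfolding is_graph_def
  proof
    fix e assume "e \<in> T'"
    then have "e \<in> E0 \<or> e = {y1,b} \<or> e = {y2,c}" using T'_def by auto
    then show "e \<subseteq> {..<n} \<and> card e = 2"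
    proof (elim disjE)
      assume "e \<in> E0" then show ?thesis using eT E0_def by simp
    next
      assume "e = {y1,b}" then show ?thesis using y1n bn by1 by auto
    next
      assume "e = {y2,c}" then show ?thesis using y2n bn cy2 by auto
    qed
  qed
  have E0T': "E0 \<subseteq> T'" using T'_def by auto
  have tox: "(v,x) \<in> (adj T')\<^sup>*" if vn: "v < n" for v
  proof -
    have y1x': "(y1,x) \<in> (adj T')\<^sup>*" by (rule rt_mono[OF E0T' y1x])
    have y2x': "(y2,x) \<in> (adj T')\<^sup>*" by (rule rt_mono[OF E0T' y2x])
    have eb: "{b,y1} \<in> T'" using T'_def by (auto simp: insert_commute)
    have ec: "{c,y2} \<in> T'" using T'_def by (auto simp: insert_commute)
    from reach3[OF vn] show ?thesis
    proof (elim disjE)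
      assume "(v,x) \<in> (adj E0)\<^sup>*" then show ?thesis by (rule rt_mono[OF E0T'])
    next
      assume "(v,b) \<in> (adj E0)\<^sup>*"
      then have "(v,b) \<in> (adj T')\<^sup>*" by (rule rt_mono[OF E0T'])
      then have "(v,y1) \<in> (adj T')\<^sup>*" by (rule rt_step[OF _ eb])
      then show ?thesis by (rule rtrancl_trans[OF _ y1x'])
    next
      assume "(v,c) \<in> (adj E0)\<^sup>*"
      then have "(v,c) \<in> (adj T')\<^sup>*" by (rule rt_mono[OF E0T'])
      then have "(v,y2) \<in> (adj T')\<^sup>*" by (rule rt_step[OF _ ec])
      then show ?thesis by (rule rtrancl_trans[OF _ y2x'])
    qed
  qed
  have conn': "\<forall>u\<in>{..<n}. \<forall>v\<in>{..<n}. (u,v) \<in> (adj T')\<^sup>*"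
  proof (intro ballI)
    fix u v assume "u \<in> {..<n}" "v \<in> {..<n}"
    then have "(u,x) \<in> (adj T')\<^sup>*" "(x,v) \<in> (adj T')\<^sup>*" using tox rt_sym by auto
    then show "(u,v) \<in> (adj T')\<^sup>*" by (rule rtrancl_trans)
  qed
  have d4': "\<forall>v\<in>{..<n}. deg T' v \<le> 4" using dform d4 by simp
  have ct': "chemical_tree n T'"
    unfolding chemical_tree_def is_tree_def using gr' n1 cT' conn' d4' by simp
  have degs: "(deg T' v = 2) = (deg T v = 2)" for v using dform[of v] dx dy1 dy2 by auto
  have segeq: "card (segments n T') = card (segments n T)"
  proof (rule seg_card_eq[OF E0_def T'_def xbT(1) xbT(2) nT1 nT2 degs])
    show "deg T x \<noteq> 2" "deg T x \<noteq> 2" "deg T y1 \<noteq> 2" "deg T y2 \<noteq> 2" using dx dy1 dy2 by simp_all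
    show "y1 \<noteq> x" "y1 \<noteq> x" "y2 \<noteq> x" "y2 \<noteq> x" "b \<noteq> c" "b \<noteq> x" "b \<noteq> x" "c \<noteq> x" "c \<noteq> x"
      "b \<noteq> y1" "b \<noteq> y2" "c \<noteq> y1" "c \<noteq> y2" using ne bc b c by1 by2 cy1 cy2 by auto
    show "x < n" "x < n" "y1 < n" "y2 < n" using xn y1n y2n by auto
    show "(b, y1) \<notin> (adj E0)\<^sup>*" "(c, y2) \<notin> (adj E0)\<^sup>*" using r1 r2 by auto
    show "y1 = y2 \<Longrightarrow> (b, c) \<notin> (adj E0)\<^sup>*" using ne by simp
    show "(b, x) \<notin> (adj E0)\<^sup>*" "(c, x) \<notin> (adj E0)\<^sup>*" using nbx ncx by auto
    show "x = x \<Longrightarrow> (b, c) \<notin> (adj E0)\<^sup>*" using nbc by simp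
    show "finite T" by (rule finT)
  qed
  have M1: "M1 n T < M1 n T'"
  proof -
    have fn: "finite {..<n::nat}" by simp
    have mem: "x \<in> {..<n}" "y1 \<in> {..<n}" "y2 \<in> {..<n}" using xn y1n y2n by auto
    define R where "R = {..<n} - {x,y1,y2}"
    have rest: "(\<Sum>v\<in>R. (deg T' v)\<^sup>2) = (\<Sum>v\<in>R. (deg T v)\<^sup>2)"
      by (rule sum.cong) (auto simp: R_def dform)
    have "M1 n T = (deg T x)\<^sup>2 + (deg T y1)\<^sup>2 + (deg T y2)\<^sup>2 + (\<Sum>v\<in>R. (deg T v)\<^sup>2)"
      unfolding M1_def R_def by (rule sum3[OF fn mem ne])
    moreover have "M1 n T' = (deg T' x)\<^sup>2 + (deg T' y1)\<^sup>2 + (deg T' y2)\<^sup>2 + (\<Sum>v\<in>R. (deg T' v)\<^sup>2)"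
      unfolding M1_def R_def by (rule sum3[OF fn mem ne])
    ultimately show ?thesis using rest dform[of x] dform[of y1] dform[of y2] dx dy1 dy2 ne by simp
  qed
  have M2: "M2 T < M2 T'"
  proof -
    define w where "w = (\<lambda>e. \<Prod>v\<in>e. deg T v)"
    define w' where "w' = (\<lambda>e. \<Prod>v\<in>e. deg T' v)"
    have M2T: "M2 T = w {x,b} + (w {x,c} + sum w E0)"
      unfolding M2_def w_def[symmetric] using TE0 finE0 nxb xbxc by simp
    have M2T': "M2 T' = w' {y1,b} + (w' {y2,c} + sum w' E0)"
      unfolding M2_def w'_def[symmetric] using TT' finE0 nE01 ybyc by simp
    have wxb: "w {x,b} = 3 * deg T b" "w {x,c} = 3 * deg T c"
      unfolding w_def using b c dx by auto
    have dTb: "deg T' b = deg T b" "deg T' c = deg T c" using dform b c by1 by2 cy1 cy2 by auto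
    have w'yb: "w' {y1,b} = 4 * deg T b" "w' {y2,c} = 4 * deg T c"
      unfolding w'_def using by1 cy2 dform[of y1] dform[of y2] dTb ne by auto
    have db1: "1 \<le> deg T b" "1 \<le> deg T c" using deg_pos[OF finT xbT(1)] deg_pos[OF finT xbT(2)] by auto
    obtain ws where ws: "{y1,ws} \<in> T" "2 \<le> deg T ws"
      using nonleaf_nb[OF finT y1xT ne(1)[symmetric]] dx by auto
    define es where "es = {y1,ws}"
    have wsy: "ws \<noteq> y1" using eT[OF ws(1)] by (auto simp: card_insert_if)
    have wsn: "ws < n" using eT[OF ws(1)] by auto
    have esE0: "es \<in> E0" using ws(1) ne by1 cy1 unfolding es_def E0_def by (auto simp: doubleton_eq_iff)
    define h where "h = (\<lambda>e. (if y1 \<in> e then 1 else 0) + (if y2 \<in> e then 1 else 0)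
        - 8 * (if x \<in> e then 1 else 0) + (if e = es then 1 else (0::int)))"
    have hle: "h e \<le> int (w' e) - int (w e)" if eE0: "e \<in> E0" for e
    proof -
      have eTT: "e \<in> T" using eE0 E0_def by simp
      obtain u v where uv: "e = {u,v}" "u \<noteq> v" using eT[OF eTT] by (meson card_2_iff)
      have un: "u < n" "v < n" using eT[OF eTT] uv by auto
      have bu: "1 \<le> deg T u" "1 \<le> deg T v" using deg_pos[OF finT eTT] uv by auto
      have we: "w e = deg T u * deg T v" "w' e = deg T' u * deg T' v" unfolding w_def w'_def using uv by auto
      show ?thesis
      proof (cases "e = es")
        case True
        then have ee: "e = {y1,ws}" using es_def by simp
        have we2: "w e = deg T y1 * deg T ws" "w' e = deg T' y1 * deg T' ws"
          unfolding w_def w'_def using ee wsy by auto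
        have "h e = 2 + (if y2 = ws then 1 else 0) - 8 * (if x = ws then 1 else 0)"
          unfolding h_def using True ee ne by auto
        moreover have "2 + (if y2 = ws then 1 else 0) - 8 * (if x = ws then 1 else 0)
            \<le> int (deg T' y1 * deg T' ws) - int (deg T y1 * deg T ws)"
          by (rule edge_gain_star[OF wsy[symmetric] dx dy1 dy2 ne ws(2) d4[OF wsn] dform])
        ultimately show ?thesis using we2 by simp
      next
        case False
        have "h e = (if y1 = u \<or> y1 = v then 1 else 0) + (if y2 = u \<or> y2 = v then 1 else 0)
           - 8 * (if x = u \<or> x = v then 1 else 0)"
          unfolding h_def using False uv by auto
        moreover have "(if y1 = u \<or> y1 = v then 1 else 0) + (if y2 = u \<or> y2 = v then 1 else 0)
           - 8 * (if x = u \<or> x = v then 1 else 0) \<le> int (deg T' u * deg T' v) - int (deg T u * deg T v)"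
          by (rule edge_gain[OF uv(2) dx dy1 dy2 ne bu(1) d4[OF un(1)] bu(2) d4[OF un(2)] dform])
        ultimately show ?thesis using we by simp
      qed
    qed
    have sumh: "sum h E0 = -1"
    proof -
      have "sum h E0 = (\<Sum>e\<in>E0. if y1 \<in> e then 1 else 0) + (\<Sum>e\<in>E0. if y2 \<in> e then 1 else 0)
          - 8 * (\<Sum>e\<in>E0. if x \<in> e then 1 else 0) + (\<Sum>e\<in>E0. if e = es then 1 else (0::int))"
        unfolding h_def by (simp add: sum.distrib sum_subtractf sum_distrib_left)
      also have "\<dots> = int (deg E0 y1) + int (deg E0 y2) - 8 * int (deg E0 x) + 1"
        using sum_ind[OF finE0] sum.delta[OF finE0, of es "\<lambda>_. (1::int)"] esE0 by simp
      also have "\<dots> = -1" using dE0x dE0y1 dE0y2 by simp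
      finally show ?thesis .
    qed
    have "sum h E0 \<le> (\<Sum>e\<in>E0. int (w' e) - int (w e))" by (rule sum_mono) (rule hle)
    also have "\<dots> = int (sum w' E0) - int (sum w E0)" by (simp add: sum_subtractf)
    finally have fin1: "-1 \<le> int (sum w' E0) - int (sum w E0)" using sumh by simp
    define A where "A = sum w' E0"
    define B where "B = sum w E0"
    have "-1 \<le> int A - int B" using fin1 unfolding A_def B_def .
    then have AB: "B \<le> A + 1" by linarith
    have "M2 T = 3 * deg T b + (3 * deg T c + B)" using M2T wxb B_def by simp
    moreover have "M2 T' = 4 * deg T b + (4 * deg T c + A)" using M2T' w'yb A_def by simp
    ultimately show ?thesis using AB db1 by linarith
  qed
  show ?thesis using ct' segeq M1 M2 by blast
qed

theorem lemma2:
  fixes n k :: nat and T :: "nat set set"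
  assumes "3 \<le> k" and "k \<le> n - 1"
    and "T \<in> CT n k"
    and "(\<forall>T'\<in>CT n k. M1 n T' \<le> M1 n T) \<or> (\<forall>T'\<in>CT n k. M2 T' \<le> M2 T)"
  shows "card {v\<in>{..<n}. deg T v = 3} \<le> 2"
proof (rule ccontr)
  assume "\<not> ?thesis"
  then have "3 \<le> card {v\<in>{..<n}. deg T v = 3}" by simp
  then obtain S where S: "S \<subseteq> {v\<in>{..<n}. deg T v = 3}" "card S = 3"
    by (meson obtain_subset_with_card_n)
  then obtain u1 u2 u3 where u: "S = {u1,u2,u3}" "u1 \<noteq> u2" "u2 \<noteq> u3" "u1 \<noteq> u3"
    by (auto simp: card_3_iff)
  have un: "u1 < n" "u2 < n" "u3 < n" and ud: "deg T u1 = 3" "deg T u2 = 3" "deg T u3 = 3"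
    using S(1) u(1) by auto
  have ct: "chemical_tree n T" and segk: "card (segments n T) = k" using assms(3) by (auto simp: CT_def)
  have "(u2,u3) \<in> (adj T)\<^sup>*" using ct un unfolding chemical_tree_def is_tree_def by auto
  from median[OF this u(2)]
  obtain T' where T': "chemical_tree n T'" "card (segments n T') = card (segments n T)"
      "M1 n T < M1 n T'" "M2 T < M2 T'"
  proof
    assume "(u1, u3) \<in> (adj {e \<in> T. u2 \<notin> e})\<^sup>*"
    from core[OF ct un(2) un(1) un(3) _ _ _ ud(2) ud(1) ud(3) this] u
    show thesis using that by auto
  next
    assume "(u2, u3) \<in> (adj {e \<in> T. u1 \<notin> e})\<^sup>*"
    from core[OF ct un(1) un(2) un(3) _ _ _ ud(1) ud(2) ud(3) this] u
    show thesis using that by auto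
  qed
  have "T' \<in> CT n k" using T' segk by (simp add: CT_def)
  then show False using assms(4) T'(3) T'(4) by auto
qed

end
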